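(* Let $R$ be a discrete $\Gamma$-ring and let $w\in R[2]$ be a formal sum law in $R$. Then there is a unique multiplicative map (morphism of $\Gamma$-rings) $\phi: H\mathbb{N}\to R$ such that $\phi(1_{2^n})=w^n\in R[2^n]$ for all $n\ge 0$. Concretely, for $(n_1,\dots,n_k)\in \mathbb{N}[k]$ one has $\phi(n_1,\dots,n_k)=f(w^n)$ for any $n$ and any pointed map $f:[2^n]\to[k]$ with $f(1_{2^n})=(n_1,\dots,n_k)$.
   Context: Let $[n]=\{0,1,\dots,n\}$, pointed at $0$. $\Gamma^{op}$ is the category with objects $[n]$, $n\ge0$, and all pointed maps. A $\Gamma$-space is a functor $F$ from $\Gamma^{op}$ to pointed simplicial sets with $F[0]$ a point; it is extended to all finite pointed sets by choosing isomorphisms with the $[n]$. For a pointed map $f:K\to L$ we write $f$ also for $F(f)$. The symmetric group $\Sigma_n$ acts on $[n]$ by permuting $\{1,\dots,n\}$ and hence acts on $F[n]$. We identify $[n]\wedge[m]$ with $[nm]$ using the inverse lexicographic order: $i\wedge j\mapsto (j-1)n+i$ for $1\le i\le n,\ 1\le j\le m$. A $\Gamma$-ring is a $\Gamma$-space $R$ with a unit $\eta:\mathbf S\to R$ ($\mathbf S$ the inclusion functor of $\Gamma^{op}$ into pointed sets) and an associative unital multiplication, equivalently a family of maps $R(K)\wedge R(L)\to R(K\wedge L)$, $p\wedge q\mapsto pq$, natural in $K$ and $L$, associative, with unit $1:=\eta(1)\in R[1]$. $R$ is discrete if each $R(K)$ is a set (a constant simplicial set). For $w\in R[2]$, $w^k\in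 R[2^k]$ denotes the $k$-fold product (with $[2]^{\wedge k}=[2^k]$ via the identification above), $w^0=1$. A multiplicative map $\phi:A\to B$ of $\Gamma$-rings is a natural transformation with $\phi\circ\eta_A=\eta_B$ and $\phi(pq)=\phi(p)\phi(q)$. The pointed map $p^n_i:[n]\to[n-1]$ ($1\le i\le n$) is given by $p^n_i(j)=j$ for $j<i$, $p^n_i(i)=0$, $p^n_i(j)=j-1$ for $j>i$. $H\mathbb{N}$ is the $\Gamma$-ring with $H\mathbb{N}(K)=$ the reduced free commutative monoid on $K$ (so $H\mathbb{N}[k]=\mathbb{N}^k$, $\mathbb N$ including $0$), pointed maps acting by summing coefficients along fibres, unit sending $k\in K$ to the generator $k$, and multiplication $(\sum_k a_k k)(\sum_l b_l l)=\sum_{k\wedge l}a_kb_l(k\wedge l)$. $1_n=(1,\dots,1)\in H\mathbb{N}[n]$. A formal sum law in a $\Gamma$-ring $R$ is an element $w\in R[2]$ with (1) $p^2_1(w)=1$ and $p^2_2(w)=1$, and (2) for every $k\ge1$, $w^k\in R[2^k]$ is fixed by the action of $\Sigma_{2^k}$. *)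

theory Defs
  imports "HOL-Combinatorics.Permutations"
begin

text \<open>The finite pointed set [n] = {0,...,n} is represented
by the natural number n; a pointed map [n] -> [m] is a function f :: nat => nat with
f 0 = 0 and f i <= m for 1 <= i <= n (values outside {0..n} are irrelevant).
A discrete Gamma-ring is given by its value sets car n = R[n], the action of pointed
maps, the multiplication R[n] x R[m] -> R[nm] and the unit 1 in R[1].\<close>

record 'a gring =
  car :: "nat \<Rightarrow> 'a set"
  act :: "nat \<Rightarrow> nat \<Rightarrow> (nat \<Rightarrow> nat) \<Rightarrow> 'a \<Rightarrow> 'a"
  mul :: "nat \<Rightarrow> nat \<Rightarrow> 'a \<Rightarrow> 'a \<Rightarrow> 'a"
  one :: 'a

definition pmap :: "nat \<Rightarrow> nat \<Rightarrow> (nat \<Rightarrow> nat) \<Rightarrow> bool" where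
  "pmap n m f \<longleftrightarrow> f 0 = 0 \<and> (\<forall>i\<in>{1..n}. f i \<le> m)"

text \<open>The smash product f /\ g : [n]/\[m] -> [n']/\[m'] of pointed maps, using the
identification of [n]/\[m] with [nm] via i/\j |-> (j-1)n+i (inverse lexicographic order).\<close>
definition smash :: "nat \<Rightarrow> nat \<Rightarrow> (nat \<Rightarrow> nat) \<Rightarrow> (nat \<Rightarrow> nat) \<Rightarrow> nat \<Rightarrow> nat" where
  "smash n n' f g k =
     (if k = 0 then 0
      else (let i = (k - 1) mod n + 1; j = (k - 1) div n + 1
            in if f i = 0 \<or> g j = 0 then 0 else (g j - 1) * n' + f i))"

definition discrete_gamma_ring :: "'a gring \<Rightarrow> bool" where
  "discrete_gamma_ring R \<longleftrightarrow>
     (\<exists>x. car R 0 = {x}) \<and>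
     (\<forall>n m f x. pmap n m f \<and> x \<in> car R n \<longrightarrow> act R n m f x \<in> car R m) \<and>
     (\<forall>n m f g x. (\<forall>i\<le>n. f i = g i) \<and> x \<in> car R n \<longrightarrow> act R n m f x = act R n m g x) \<and>
     (\<forall>n x. x \<in> car R n \<longrightarrow> act R n n id x = x) \<and>
     (\<forall>n m l f g x. pmap n m f \<and> pmap m l g \<and> x \<in> car R n \<longrightarrow>
         act R m l g (act R n m f x) = act R n l (g \<circ> f) x) \<and>
     (\<forall>n m p q. p \<in> car R n \<and> q \<in> car R m \<longrightarrow> mul R n m p q \<in> car R (n * m)) \<and>
     (\<forall>n m n' m' f g p q. pmap n n' f \<and> pmap m m' g \<and> p \<in> car R n \<and> q \<in> car R m \<longrightarrow>
         act R (n * m) (n' * m') (smash n n' f g) (mul R n m p q)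
           = mul R n' m' (act R n n' f p) (act R m m' g q)) \<and>
     (\<forall>n m l p q r. p \<in> car R n \<and> q \<in> car R m \<and> r \<in> car R l \<longrightarrow>
         mul R (n * m) l (mul R n m p q) r = mul R n (m * l) p (mul R m l q r)) \<and>
     one R \<in> car R 1 \<and>
     (\<forall>n p. p \<in> car R n \<longrightarrow> mul R 1 n (one R) p = p \<and> mul R n 1 p (one R) = p)"

definition eta :: "'a gring \<Rightarrow> nat \<Rightarrow> nat \<Rightarrow> 'a" where
  "eta R n k = act R 1 n (\<lambda>i. if i = 1 then k else 0) (one R)"

primrec wpow :: "'a gring \<Rightarrow> 'a \<Rightarrow> nat \<Rightarrow> 'a" where
  "wpow R w 0 = one R"
| "wpow R w (Suc k) = mul R (2 ^ k) 2 (wpow R w k) w"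

definition proj :: "nat \<Rightarrow> nat \<Rightarrow> nat" where
  "proj i j = (if j < i then j else if j = i then 0 else j - 1)"

definition formal_sum_law :: "'a gring \<Rightarrow> 'a \<Rightarrow> bool" where
  "formal_sum_law R w \<longleftrightarrow>
     w \<in> car R 2 \<and>
     act R 2 1 (proj 1) w = one R \<and> act R 2 1 (proj 2) w = one R \<and>
     (\<forall>k\<ge>1. \<forall>\<sigma>. \<sigma> permutes {1..2 ^ k} \<longrightarrow> act R (2 ^ k) (2 ^ k) \<sigma> (wpow R w k) = wpow R w k)"

definition HN :: "nat list gring" where
  "HN = \<lparr> car = (\<lambda>n. {xs. length xs = n}),
          act = (\<lambda>n m f xs. map (\<lambda>j. \<Sum>i\<in>{i\<in>{1..n}. f i = j}. xs ! (i - 1)) [1..<m + 1]),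
          mul = (\<lambda>n m xs ys. concat (map (\<lambda>b. map (\<lambda>a. a * b) xs) ys)),
          one = [1] \<rparr>"

text \<open>Multiplicative maps of (discrete) Gamma-rings.  The components are required to be
undefined outside the carriers, so that a morphism is determined by its components on A[n].\<close>
definition mult_map :: "'a gring \<Rightarrow> 'b gring \<Rightarrow> (nat \<Rightarrow> 'a \<Rightarrow> 'b) \<Rightarrow> bool" where
  "mult_map A B \<phi> \<longleftrightarrow>
     (\<forall>n x. x \<in> car A n \<longrightarrow> \<phi> n x \<in> car B n) \<and>
     (\<forall>n x. x \<notin> car A n \<longrightarrow> \<phi> n x = undefined) \<and>
     (\<forall>n m f x. pmap n m f \<and> x \<in> car A n \<longrightarrow> \<phi> m (act A n m f x) = act B n m f (\<phi> n x)) \<and>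
     (\<forall>n k. k \<le> n \<longrightarrow> \<phi> n (eta A n k) = eta B n k) \<and>
     (\<forall>n m p q. p \<in> car A n \<and> q \<in> car A m \<longrightarrow>
         \<phi> (n * m) (mul A n m p q) = mul B n m (\<phi> n p) (\<phi> m q))"

end

theory Submission imports Defs begin

declare upt_Suc[simp del]

lemma HN_simps:
  "car HN n = {xs. length xs = n}"
  "act HN n m f xs = map (\<lambda>j. \<Sum>i\<in>{i\<in>{1..n}. f i = j}. xs ! (i - 1)) [1..<m + 1]"
  "mul HN n m xs ys = concat (map (\<lambda>b. map (\<lambda>a. a * b) xs) ys)"
  "one HN = [1]"
  by (simp_all add: HN_def)

lemma actrep:
  "act HN N m f (replicate N 1) = map (\<lambda>j. card {i\<in>{1..N}. f i = j}) [1..<m+1]"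
proof -
  have "(\<Sum>i\<in>{i\<in>{1..N}. f i = j}. replicate N (1::nat) ! (i - 1)) = card {i\<in>{1..N}. f i = j}" for j
    by (subst sum.cong[where B="{i\<in>{1..N}. f i = j}" and h="\<lambda>_. 1"]) auto
  then show ?thesis by (simp add: HN_simps)
qed

lemma nth_map_upt1[simp]: "i \<in> {1..m} \<Longrightarrow> map h [1..<m+1] ! (i - 1) = h i"
  by (subst nth_map) (auto simp del: upt_Suc simp: nth_upt)

lemma nth_map_upt2[simp]: "Suc 0 \<le> i \<Longrightarrow> i \<le> m \<Longrightarrow> map h [Suc 0..<Suc m] ! (i - Suc 0) = h i"
  using nth_map_upt1[of i m h] by simp

lemma card_fib_sum:
  assumes "finite A" "finite J"
  shows "card {i\<in>A. f i \<in> J} = (\<Sum>j\<in>J. card {i\<in>A. f i = j})"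
  using assms(2)
proof (induction J rule: finite_induct)
  case empty then show ?case by simp
next
  case (insert x J)
  have "{i\<in>A. f i \<in> insert x J} = {i\<in>A. f i = x} \<union> {i\<in>A. f i \<in> J}" by auto
  moreover have "card ({i\<in>A. f i = x} \<union> {i\<in>A. f i \<in> J}) = card {i\<in>A. f i = x} + card {i\<in>A. f i \<in> J}"
    by (rule card_Un_disjoint) (use assms(1) insert in auto)
  ultimately show ?case using insert by simp
qed

lemma HN_comp_rep:
  assumes "pmap N m f" "pmap m l g"
  shows "act HN m l g (act HN N m f (replicate N 1)) = act HN N l (g \<circ> f) (replicate N 1)"
proof -
  have "(\<Sum>i\<in>{i\<in>{1..m}. g i = j}. map (\<lambda>j. card {i\<in>{1..N}. f i = j}) [1..<m+1] ! (i - 1))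
        = card {t\<in>{1..N}. g (f t) = j}" if j: "j \<in> {1..l}" for j
  proof -
    have "(\<Sum>i\<in>{i\<in>{1..m}. g i = j}. map (\<lambda>j. card {i\<in>{1..N}. f i = j}) [1..<m+1] ! (i - 1))
       = (\<Sum>i\<in>{i\<in>{1..m}. g i = j}. card {t\<in>{1..N}. f t = i})"
      by (rule sum.cong) (simp_all del: upt_Suc add: nth_map_upt1)
    also have "\<dots> = card {t\<in>{1..N}. f t \<in> {i\<in>{1..m}. g i = j}}"
      by (rule card_fib_sum[symmetric]) auto
    also have "{t\<in>{1..N}. f t \<in> {i\<in>{1..m}. g i = j}} = {t\<in>{1..N}. g (f t) = j}"
    proof -
      { fix t assume t: "t \<in> {1..N}" "g (f t) = j"
        have "f t \<noteq> 0" using t j assms(2) unfolding pmap_def by (metis atLeastAtMost_iff not_one_le_zero)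
        moreover have "f t \<le> m" using t assms(1) unfolding pmap_def by auto
        ultimately have "f t \<in> {1..m}" by auto }
      then show ?thesis by auto
    qed
    finally show ?thesis .
  qed
  then show ?thesis unfolding actrep unfolding HN_simps by (intro map_cong refl) auto
qed

lemma perm_exists:
  assumes "finite A" "\<And>j. card {i\<in>A. f i = j} = card {i\<in>A. g i = j}"
  shows "\<exists>\<sigma>. \<sigma> permutes A \<and> (\<forall>i\<in>A. g i = f (\<sigma> i))"
proof -
  have "\<forall>j. \<exists>h. bij_betw h {i\<in>A. g i = j} {i\<in>A. f i = j}"
    by (intro allI finite_same_card_bij) (use assms in auto)
  then obtain h where h: "\<And>j. bij_betw (h j) {i\<in>A. g i = j} {i\<in>A. f i = j}" by metis
  define \<sigma> where "\<sigma> = (\<lambda>i. if i \<in> A then h (g i) i else i)"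
  have s1: "\<sigma> i \<in> A \<and> f (\<sigma> i) = g i" if "i \<in> A" for i
    using bij_betwE[OF h[of "g i"]] that by (auto simp: \<sigma>_def)
  have inj: "inj_on \<sigma> A"
  proof (rule inj_onI)
    fix a b assume ab: "a \<in> A" "b \<in> A" "\<sigma> a = \<sigma> b"
    then have "g a = g b" using s1 by metis
    then have "h (g a) a = h (g a) b" using ab by (simp add: \<sigma>_def)
    moreover have "inj_on (h (g a)) {i\<in>A. g i = g a}" using h bij_betw_def by blast
    ultimately show "a = b" using ab \<open>g a = g b\<close> by (auto dest: inj_onD)
  qed
  have im: "\<sigma> ` A = A" using endo_inj_surj[OF assms(1) _ inj] s1 by blast
  have "\<sigma> permutes A"
    by (rule bij_imp_permutes) (use inj im in \<open>auto simp: bij_betw_def \<sigma>_def\<close>)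
  then show ?thesis using s1 by metis
qed

lemma fib_eq:
  assumes "pmap N k f" "pmap N k f'" "act HN N k f (replicate N 1) = act HN N k f' (replicate N 1)"
  shows "card {i\<in>{1..N}. f i = j} = card {i\<in>{1..N}. f' i = j}"
proof -
  have A: "card {i\<in>{1..N}. f i = j} = card {i\<in>{1..N}. f' i = j}" if "j \<in> {1..k}" for j
  proof -
    have "map (\<lambda>j. card {i\<in>{1..N}. f i = j}) [1..<k+1] ! (j - 1) = map (\<lambda>j. card {i\<in>{1..N}. f' i = j}) [1..<k+1] ! (j - 1)"
      using assms(3) by (simp only: actrep)
    then show ?thesis using that by (simp only: nth_map_upt1)
  qed
  have S: "card {i\<in>{1..N}. h i \<in> {1..k}} = (\<Sum>j\<in>{1..k}. card {i\<in>{1..N}. h i = j})" for h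
    by (rule card_fib_sum) auto
  have Z: "card {i\<in>{1..N}. h i = 0} = N - card {i\<in>{1..N}. h i \<in> {1..k}}" if "pmap N k h" for h
  proof -
    have "{i\<in>{1..N}. h i = 0} = {1..N} - {i\<in>{1..N}. h i \<in> {1..k}}" using that by (auto simp: pmap_def)
    also have "card ({1..N} - {i\<in>{1..N}. h i \<in> {1..k}}) = card {1..N} - card {i\<in>{1..N}. h i \<in> {1..k}}"
      by (rule card_Diff_subset) auto
    finally show ?thesis by simp
  qed
  show ?thesis
  proof (cases "j = 0")
    case True
    have ss: "(\<Sum>j\<in>{1..k}. card {i\<in>{1..N}. f i = j}) = (\<Sum>j\<in>{1..k}. card {i\<in>{1..N}. f' i = j})"
      by (rule sum.cong) (simp_all only: A)
    show ?thesis unfolding True Z[OF assms(1)] Z[OF assms(2)] S ss ..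
  next
    case False
    show ?thesis
    proof (cases "j \<le> k")
      case True then show ?thesis using A False by simp
    next
      case False
      then have e1: "{i\<in>{1..N}. f i = j} = {}" and e2: "{i\<in>{1..N}. f' i = j} = {}" using assms(1,2) by (auto simp: pmap_def)
      show ?thesis by (simp only: e1 e2)
    qed
  qed
qed

lemma dgr_act_car: "discrete_gamma_ring R \<Longrightarrow> pmap n m f \<Longrightarrow> x \<in> car R n \<Longrightarrow> act R n m f x \<in> car R m"
  by (simp add: discrete_gamma_ring_def)
lemma dgr_act_cong: "discrete_gamma_ring R \<Longrightarrow> (\<And>i. i \<le> n \<Longrightarrow> f i = g i) \<Longrightarrow> x \<in> car R n \<Longrightarrow> act R n m f x = act R n m g x"
  by (simp add: discrete_gamma_ring_def)
lemma dgr_act_id: "discrete_gamma_ring R \<Longrightarrow> x \<in> car R n \<Longrightarrow> act R n n id x = x"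
  by (simp add: discrete_gamma_ring_def)
lemma dgr_act_comp: "discrete_gamma_ring R \<Longrightarrow> pmap n m f \<Longrightarrow> pmap m l g \<Longrightarrow> x \<in> car R n \<Longrightarrow>
         act R m l g (act R n m f x) = act R n l (g \<circ> f) x"
  by (simp add: discrete_gamma_ring_def)
lemma dgr_mul_car: "discrete_gamma_ring R \<Longrightarrow> p \<in> car R n \<Longrightarrow> q \<in> car R m \<Longrightarrow> mul R n m p q \<in> car R (n * m)"
  by (simp add: discrete_gamma_ring_def)
lemma dgr_smash: "discrete_gamma_ring R \<Longrightarrow> pmap n n' f \<Longrightarrow> pmap m m' g \<Longrightarrow> p \<in> car R n \<Longrightarrow> q \<in> car R m \<Longrightarrow>
         act R (n * m) (n' * m') (smash n n' f g) (mul R n m p q)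
           = mul R n' m' (act R n n' f p) (act R m m' g q)"
  by (simp add: discrete_gamma_ring_def)
lemma dgr_assoc: "discrete_gamma_ring R \<Longrightarrow> p \<in> car R n \<Longrightarrow> q \<in> car R m \<Longrightarrow> r \<in> car R l \<Longrightarrow>
         mul R (n * m) l (mul R n m p q) r = mul R n (m * l) p (mul R m l q r)"
  by (simp add: discrete_gamma_ring_def)
lemma dgr_one: "discrete_gamma_ring R \<Longrightarrow> one R \<in> car R 1"
  by (simp add: discrete_gamma_ring_def)
lemma dgr_unit: "discrete_gamma_ring R \<Longrightarrow> p \<in> car R n \<Longrightarrow> mul R 1 n (one R) p = p \<and> mul R n 1 p (one R) = p"
  by (simp add: discrete_gamma_ring_def)

lemma wpow_car: "discrete_gamma_ring R \<Longrightarrow> w \<in> car R 2 \<Longrightarrow> wpow R w n \<in> car R (2 ^ n)"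
proof (induction n)
  case 0 then show ?case using dgr_one[of R] by simp
next
  case (Suc n) then show ?case using dgr_mul_car[of R "wpow R w n" "2^n" w 2] by (simp add: mult.commute)
qed

lemma same_level:
  assumes R: "discrete_gamma_ring R" and w: "formal_sum_law R w"
    and f: "pmap (2^n) k f" and f': "pmap (2^n) k f'"
    and eq: "act HN (2^n) k f (replicate (2^n) 1) = act HN (2^n) k f' (replicate (2^n) 1)"
  shows "act R (2^n) k f (wpow R w n) = act R (2^n) k f' (wpow R w n)"
proof -
  have w2: "w \<in> car R 2" using w unfolding formal_sum_law_def by blast
  have wc: "wpow R w n \<in> car R (2^n)" by (rule wpow_car[OF R w2])
  obtain \<sigma> where \<sigma>: "\<sigma> permutes {1..2^n}" "\<forall>i\<in>{1..2^n}. f' i = f (\<sigma> i)"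
  proof -
    have "\<exists>\<sigma>. \<sigma> permutes {1..2^n} \<and> (\<forall>i\<in>{1..2^n}. f' i = f (\<sigma> i))"
      by (rule perm_exists) (use fib_eq[OF f f' eq] in auto)
    then show ?thesis using that by blast
  qed
  have s0: "\<sigma> 0 = 0" using \<sigma>(1) by (simp add: permutes_not_in)
  have ps: "pmap (2^n) (2^n) \<sigma>" unfolding pmap_def
  proof (intro conjI ballI)
    show "\<sigma> 0 = 0" by (rule s0)
    fix i assume "i \<in> {1..(2::nat)^n}"
    then have "\<sigma> i \<in> {1..2^n}" using permutes_in_image[OF \<sigma>(1)] by blast
    then show "\<sigma> i \<le> 2^n" by simp
  qed
  have "act R (2^n) k f' (wpow R w n) = act R (2^n) k (f \<circ> \<sigma>) (wpow R w n)"
  proof (rule dgr_act_cong[OF R _ wc])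
    fix i :: nat assume "i \<le> 2^n"
    then show "f' i = (f \<circ> \<sigma>) i" using \<sigma>(2) s0 f f' by (cases "i = 0") (auto simp: pmap_def)
  qed
  also have "\<dots> = act R (2^n) k f (act R (2^n) (2^n) \<sigma> (wpow R w n))"
    using dgr_act_comp[OF R ps f wc] by simp
  also have "act R (2^n) (2^n) \<sigma> (wpow R w n) = wpow R w n"
  proof (cases "n = 0")
    case True
    then have "\<sigma> 1 = 1" using permutes_in_image[OF \<sigma>(1), of 1] by simp
    then have "act R (2^n) (2^n) \<sigma> (wpow R w n) = act R (2^n) (2^n) id (wpow R w n)"
      using True s0 by (intro dgr_act_cong[OF R _ wc]) (auto simp: le_Suc_eq)
    then show ?thesis using dgr_act_id[OF R wc] by simp
  next
    case False
    have "\<forall>k\<ge>1. \<forall>\<sigma>. \<sigma> permutes {1..2 ^ k} \<longrightarrow> act R (2 ^ k) (2 ^ k) \<sigma> (wpow R w k) = wpow R w k"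
      using w unfolding formal_sum_law_def by blast
    then show ?thesis using False \<sigma>(1) by simp
  qed
  finally show ?thesis by simp
qed

lemma pmap_comp: "pmap n m f \<Longrightarrow> pmap m l g \<Longrightarrow> pmap n l (g \<circ> f)"
proof -
  assume f: "pmap n m f" and g: "pmap m l g"
  show ?thesis unfolding pmap_def
  proof (intro conjI ballI)
    show "(g \<circ> f) 0 = 0" using f g by (simp add: pmap_def)
    fix i assume i: "i \<in> {1..n}"
    show "(g \<circ> f) i \<le> l"
    proof (cases "f i = 0")
      case True then show ?thesis using g by (simp add: pmap_def)
    next
      case False
      then have "f i \<in> {1..m}" using f i unfolding pmap_def by auto
      then show ?thesis using g unfolding pmap_def by simp
    qed
  qed
qed

definition lp :: "nat \<Rightarrow> nat \<Rightarrow> nat" where "lp N = smash N N id (proj 2)"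

lemma lp_val:
  assumes "0 < N" "t \<le> 2 * N"
  shows "lp N t = (if t \<le> N then t else 0)"
proof (cases "t = 0")
  case True then show ?thesis by (simp add: lp_def smash_def)
next
  case False
  show ?thesis
  proof (cases "t \<le> N")
    case True
    then have "(t - 1) div N = 0" "(t - 1) mod N = t - 1" using False assms by auto
    then show ?thesis using True False by (simp add: lp_def smash_def proj_def)
  next
    case nle: False
    have e: "t - 1 = N + (t - 1 - N)" using nle by simp
    have lt: "t - 1 - N < N" using assms nle by simp
    have "(t - 1) div N = 1" by (rule div_nat_eqI) (use nle assms in auto)
    then show ?thesis using nle False by (simp add: lp_def smash_def proj_def Let_def)
  qed
qed

lemma pmap_lp: assumes "0 < N" shows "pmap (2 * N) N (lp N)"
  unfolding pmap_def
proof (intro conjI ballI)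
  show "lp N 0 = 0" by (simp add: lp_def smash_def)
  fix i assume "i \<in> {1..2*N}"
  then show "lp N i \<le> N" using lp_val[OF assms, of i] by simp
qed

lemma HN_lp: assumes "0 < N" shows "act HN (2 * N) N (lp N) (replicate (2 * N) 1) = replicate N 1"
proof -
  have "card {t\<in>{1..2*N}. lp N t = j} = 1" if "j \<in> {1..N}" for j
  proof -
    have "{t\<in>{1..2*N}. lp N t = j} = {j}" using that assms by (auto simp: lp_val split: if_splits)
    then show ?thesis by simp
  qed
  then have "map (\<lambda>j. card {t\<in>{1..2*N}. lp N t = j}) [1..<N+1] = map (\<lambda>j. 1) [1..<N+1]"
    by (intro map_cong) auto
  then show ?thesis unfolding actrep by (simp add: map_replicate_const)
qed

lemma fsl_w2: "formal_sum_law R w \<Longrightarrow> w \<in> car R 2"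
  unfolding formal_sum_law_def by blast
lemma fsl_p2: "formal_sum_law R w \<Longrightarrow> act R 2 1 (proj 2) w = one R"
  unfolding formal_sum_law_def by blast

lemma R_lp:
  assumes R: "discrete_gamma_ring R" and w: "formal_sum_law R w"
  shows "act R (2 * 2^n) (2^n) (lp (2^n)) (wpow R w (Suc n)) = wpow R w n"
proof -
  have wc: "wpow R w n \<in> car R (2^n)" by (rule wpow_car[OF R fsl_w2[OF w]])
  have p1: "pmap (2^n) (2^n) id" by (simp add: pmap_def)
  have p2: "pmap 2 1 (proj 2)" by (simp add: pmap_def proj_def)
  have "act R (2^n * 2) (2^n * 1) (smash (2^n) (2^n) id (proj 2)) (mul R (2^n) 2 (wpow R w n) w)
      = mul R (2^n) 1 (act R (2^n) (2^n) id (wpow R w n)) (act R 2 1 (proj 2) w)"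
    by (rule dgr_smash[OF R p1 p2 wc fsl_w2[OF w]])
  also have "\<dots> = wpow R w n" using dgr_act_id[OF R wc] fsl_p2[OF w] dgr_unit[OF R wc] by simp
  finally show ?thesis by (simp add: lp_def mult.commute)
qed

lemma lift:
  assumes R: "discrete_gamma_ring R" and w: "formal_sum_law R w" and f: "pmap (2^n) k f" and nm: "n \<le> m"
  shows "\<exists>g. pmap (2^m) k g \<and> act HN (2^m) k g (replicate (2^m) 1) = act HN (2^n) k f (replicate (2^n) 1)
            \<and> act R (2^m) k g (wpow R w m) = act R (2^n) k f (wpow R w n)"
  using nm
proof (induction m rule: dec_induct)
  case base then show ?case using f by blast
next
  case (step m)
  then obtain g where g: "pmap (2^m) k g" "act HN (2^m) k g (replicate (2^m) 1) = act HN (2^n) k f (replicate (2^n) 1)"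
            "act R (2^m) k g (wpow R w m) = act R (2^n) k f (wpow R w n)" by blast
  have N: "(0::nat) < 2^m" by simp
  have pl: "pmap (2 * 2^m) (2^m) (lp (2^m))" by (rule pmap_lp[OF N])
  have wc: "wpow R w (Suc m) \<in> car R (2 * 2^m)" using wpow_car[OF R fsl_w2[OF w], of "Suc m"] by simp
  have "pmap (2^Suc m) k (g \<circ> lp (2^m))" using pmap_comp[OF pl g(1)] by simp
  moreover have "act HN (2^Suc m) k (g \<circ> lp (2^m)) (replicate (2^Suc m) 1) = act HN (2^n) k f (replicate (2^n) 1)"
    using HN_comp_rep[OF pl g(1)] HN_lp[OF N] g(2) by simp
  moreover have "act R (2^Suc m) k (g \<circ> lp (2^m)) (wpow R w (Suc m)) = act R (2^n) k f (wpow R w n)"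
    using dgr_act_comp[OF R pl g(1) wc] R_lp[OF R w, of m] g(3) by simp
  ultimately show ?case by blast
qed

lemma wd:
  assumes R: "discrete_gamma_ring R" and w: "formal_sum_law R w"
    and f: "pmap (2^n) k f" and f': "pmap (2^n') k f'"
    and eq: "act HN (2^n) k f (replicate (2^n) 1) = act HN (2^n') k f' (replicate (2^n') 1)"
  shows "act R (2^n) k f (wpow R w n) = act R (2^n') k f' (wpow R w n')"
proof -
  have *: "act R (2^a) k h (wpow R w a) = act R (2^b) k h' (wpow R w b)"
    if h: "pmap (2^a) k h" and h': "pmap (2^b) k h'" and ab: "a \<le> b"
      and e: "act HN (2^a) k h (replicate (2^a) 1) = act HN (2^b) k h' (replicate (2^b) 1)" for a b h h'
  proof -
    obtain g where g: "pmap (2^b) k g" "act HN (2^b) k g (replicate (2^b) 1) = act HN (2^a) k h (replicate (2^a) 1)"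
            "act R (2^b) k g (wpow R w b) = act R (2^a) k h (wpow R w a)"
      using lift[OF R w h ab] by blast
    show ?thesis using same_level[OF R w g(1) h'] g(2,3) e by simp
  qed
  show ?thesis
  proof (cases "n \<le> n'")
    case True show ?thesis by (rule *[OF f f' True eq])
  next
    case False then show ?thesis using *[OF f' f _ eq[symmetric]] by simp
  qed
qed

lemma rep_exists:
  fixes xs :: "nat list"
  assumes len: "length xs = k"
  shows "\<exists>n f. pmap (2^n) k f \<and> act HN (2^n) k f (replicate (2^n) 1) = xs"
proof -
  define S where "S j = (\<Sum>i<j. xs ! i)" for j
  have Smono: "S a \<le> S b" if "a \<le> b" for a b
    unfolding S_def using that by (intro sum_mono2) auto
  have Ssuc: "S (Suc j) = S j + xs ! j" for j unfolding S_def by simp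
  define n where "n = S k"
  have Nge: "S k \<le> 2^n" unfolding n_def by (simp add: less_imp_le)
  define f where "f t = (if t = 0 \<or> S k < t then 0 else LEAST j. t \<le> S j)" for t
  have fib: "{t\<in>{1..2^n}. f t = j} = {S (j - 1)<..S j}" if j: "j \<in> {1..k}" for j
  proof (intro equalityI subsetI)
    fix t assume "t \<in> {t\<in>{1..2^n}. f t = j}"
    then have t: "1 \<le> t" "f t = j" by auto
    have tk: "t \<le> S k" using t j unfolding f_def by (auto split: if_splits)
    then have L: "(LEAST j. t \<le> S j) = j" using t unfolding f_def by auto
    have "t \<le> S j" using LeastI[of "\<lambda>j. t \<le> S j" k] tk L by simp
    moreover have "\<not> t \<le> S (j - 1)" using not_less_Least[of "j - 1" "\<lambda>j. t \<le> S j"] L j by auto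
    ultimately show "t \<in> {S (j - 1)<..S j}" by auto
  next
    fix t assume t: "t \<in> {S (j - 1)<..S j}"
    have t1: "1 \<le> t" using t by auto
    have tk: "t \<le> S k" using t Smono[of j k] j by auto
    have "(LEAST j. t \<le> S j) = j"
    proof (rule Least_equality)
      show "t \<le> S j" using t by auto
      fix y assume y: "t \<le> S y"
      show "j \<le> y"
      proof (rule ccontr)
        assume "\<not> j \<le> y"
        then have "S y \<le> S (j - 1)" by (intro Smono) auto
        then show False using t y by auto
      qed
    qed
    then show "t \<in> {t\<in>{1..2^n}. f t = j}" using t1 tk Nge unfolding f_def by auto
  qed
  have cardfib: "card {t\<in>{1..2^n}. f t = j} = xs ! (j - 1)" if j: "j \<in> {1..k}" for j
  proof -
    have "S j = S (j - 1) + xs ! (j - 1)" using Ssuc[of "j - 1"] j by simp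
    then show ?thesis using fib[OF j] by simp
  qed
  have pf: "pmap (2^n) k f"
    unfolding pmap_def
  proof (intro conjI ballI)
    show "f 0 = 0" by (simp add: f_def)
    fix t assume "t \<in> {1..(2::nat)^n}"
    show "f t \<le> k"
    proof (cases "t = 0 \<or> S k < t")
      case True then show ?thesis by (simp add: f_def)
    next
      case False
      then have "f t = (LEAST j. t \<le> S j)" by (simp add: f_def)
      also have "\<dots> \<le> k" using False by (intro Least_le) auto
      finally show ?thesis .
    qed
  qed
  have "act HN (2^n) k f (replicate (2^n) 1) = xs"
    unfolding actrep
  proof (rule nth_equalityI)
    show "length (map (\<lambda>j. card {i \<in> {1..2 ^ n}. f i = j}) [1..<k + 1]) = length xs" using len by simp
    fix i assume "i < length (map (\<lambda>j. card {i \<in> {1..2 ^ n}. f i = j}) [1..<k + 1])"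
    then have i: "i < k" by simp
    have "map (\<lambda>j. card {i \<in> {1..2 ^ n}. f i = j}) [1..<k + 1] ! i = card {t \<in> {1..2 ^ n}. f t = i + 1}"
      using i by (simp add: nth_upt)
    also have "\<dots> = xs ! i" using cardfib[of "i + 1"] i by simp
    finally show "map (\<lambda>j. card {i \<in> {1..2 ^ n}. f i = j}) [1..<k + 1] ! i = xs ! i" .
  qed
  then show ?thesis using pf by blast
qed

lemma divmod_uniq:
  fixes a b c d k :: nat
  assumes "a * k + b = c * k + d" "b < k" "d < k"
  shows "a = c \<and> b = d"
proof -
  have 1: "(b + a * k) div k = a" "(b + a * k) mod k = b" using assms(2) by simp_all
  have 2: "(d + c * k) div k = c" "(d + c * k) mod k = d" using assms(3) by simp_all
  show ?thesis using 1 2 assms(1) by (metis add.commute)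
qed

lemma smash_at:
  assumes a: "a \<in> {1..N}" and b: "1 \<le> b"
  shows "smash N k f g ((b - 1) * N + a) = (if f a = 0 \<or> g b = 0 then 0 else (g b - 1) * k + f a)"
proof -
  have e: "(b - 1) * N + a - 1 = (a - 1) + (b - 1) * N" using a by auto
  have "a - 1 < N" using a by auto
  then have m: "((b - 1) * N + a - 1) mod N = a - 1" "((b - 1) * N + a - 1) div N = b - 1"
    unfolding e by simp_all
  have "(b - 1) * N + a \<noteq> 0" using a by auto
  then show ?thesis unfolding smash_def Let_def m using a b by simp
qed

lemma smash_fib:
  assumes f: "pmap N k f" and g: "pmap M l g" and i: "i < k" and j: "j < l"
  shows "card {s\<in>{1..N*M}. smash N k f g s = j * k + i + 1}
       = card {a\<in>{1..N}. f a = i + 1} * card {b\<in>{1..M}. g b = j + 1}"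
proof -
  let ?F = "{a\<in>{1..N}. f a = i + 1}" and ?G = "{b\<in>{1..M}. g b = j + 1}"
  let ?h = "\<lambda>(a, b). (b - 1) * N + a"
  have inj: "inj_on ?h (?F \<times> ?G)"
  proof (rule inj_onI)
    fix x y assume x: "x \<in> ?F \<times> ?G" and y: "y \<in> ?F \<times> ?G" and eq0: "?h x = ?h y"
    obtain a b where xab: "x = (a, b)" by fastforce
    obtain a' b' where yab: "y = (a', b')" by fastforce
    have A: "a \<in> ?F" "b \<in> ?G" "a' \<in> ?F" "b' \<in> ?G" using x y xab yab by auto
    have eq: "(b - 1) * N + a = (b' - 1) * N + a'" using eq0 xab yab by simp
    have "(b - 1) * N + (a - 1) = (b' - 1) * N + (a' - 1)" "a - 1 < N" "a' - 1 < N" using A eq by auto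
    then have "b - 1 = b' - 1 \<and> a - 1 = a' - 1" by (rule divmod_uniq)
    then show "x = y" using A xab yab by auto
  qed
  have im: "?h ` (?F \<times> ?G) = {s\<in>{1..N*M}. smash N k f g s = j * k + i + 1}"
  proof (intro equalityI subsetI)
    fix s assume "s \<in> ?h ` (?F \<times> ?G)"
    then obtain a b where ab: "a \<in> ?F" "b \<in> ?G" "s = (b - 1) * N + a" by auto
    have "(b - 1) * N + a \<le> (b - 1) * N + N" using ab by auto
    also have "\<dots> = b * N" using ab by (cases b) auto
    also have "\<dots> \<le> M * N" using ab by auto
    finally have "s \<le> N * M" using ab by (simp add: mult.commute)
    moreover have "smash N k f g s = j * k + i + 1" using ab smash_at[of a N b k f g] by auto
    ultimately show "s \<in> {s\<in>{1..N*M}. smash N k f g s = j * k + i + 1}" using ab by auto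
  next
    fix s assume s: "s \<in> {s\<in>{1..N*M}. smash N k f g s = j * k + i + 1}"
    define a where "a = (s - 1) mod N + 1"
    define b where "b = (s - 1) div N + 1"
    have N0: "0 < N" using s by (cases N) auto
    have se: "s = (b - 1) * N + a" unfolding a_def b_def using s by auto
    have a1: "a \<in> {1..N}" unfolding a_def using N0 mod_less_divisor[OF N0, of "s - 1"] by (auto simp del: mod_less_divisor)
    have "(s - 1) div N < M" using s N0 by (auto simp: div_less_iff_less_mult mult.commute)
    then have b1: "b \<in> {1..M}" unfolding b_def by auto
    have sv: "smash N k f g s = (if f a = 0 \<or> g b = 0 then 0 else (g b - 1) * k + f a)"
      using smash_at[OF a1, of b k f g] b1 se by auto
    then have nz: "f a \<noteq> 0" "g b \<noteq> 0" and v: "(g b - 1) * k + f a = j * k + i + 1" using s by (auto split: if_splits)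
    have fk: "f a \<le> k" using f a1 unfolding pmap_def by auto
    have "(g b - 1) * k + (f a - 1) = j * k + i" using v nz by auto
    then have "g b - 1 = j \<and> f a - 1 = i" using fk nz i by (intro divmod_uniq) auto
    then have "a \<in> ?F" "b \<in> ?G" using a1 b1 nz by auto
    then show "s \<in> ?h ` (?F \<times> ?G)" using se by force
  qed
  have "card {s\<in>{1..N*M}. smash N k f g s = j * k + i + 1} = card (?F \<times> ?G)"
    using card_image[OF inj] im by simp
  then show ?thesis by (simp add: card_cartesian_product)
qed

lemma len_concat_mul: "length (concat (map (\<lambda>b. map (\<lambda>a. a * b) xs) ys)) = length ys * length xs"
  by (induction ys) auto

lemma nth_concat_mul:
  fixes xs ys :: "nat list"
  assumes "i < length xs" "j < length ys"
  shows "concat (map (\<lambda>b. map (\<lambda>a. a * b) xs) ys) ! (j * length xs + i) = xs ! i * ys ! j"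
  using assms(2)
proof (induction ys arbitrary: j)
  case Nil then show ?case by simp
next
  case (Cons y ys)
  show ?case
  proof (cases j)
    case 0 then show ?thesis using assms(1) by (simp add: nth_append)
  next
    case (Suc j')
    have "concat (map (\<lambda>b. map (\<lambda>a. a * b) xs) (y # ys)) ! (j * length xs + i)
        = concat (map (\<lambda>b. map (\<lambda>a. a * b) xs) ys) ! (j' * length xs + i)"
      using Suc by (simp add: nth_append add.assoc)
    then show ?thesis using Cons Suc by simp
  qed
qed

lemma mul_rep: "mul HN N M (replicate N 1) (replicate M 1) = replicate (N * M) (1::nat)"
proof -
  have "concat (map (\<lambda>b. map (\<lambda>a. a * b) (replicate N (1::nat))) (replicate M 1)) = replicate (M * N) 1"
    by (induction M) (auto simp: replicate_add)
  then show ?thesis by (simp add: HN_simps mult.commute)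
qed

lemma smash_rep:
  assumes f: "pmap N k f" and g: "pmap M l g"
  shows "act HN (N * M) (k * l) (smash N k f g) (replicate (N * M) 1)
       = mul HN k l (act HN N k f (replicate N 1)) (act HN M l g (replicate M 1))"
  unfolding actrep HN_simps(3)
proof (rule nth_equalityI)
  show "length (map (\<lambda>j. card {i \<in> {1..N * M}. smash N k f g i = j}) [1..<k * l + 1]) =
    length (concat (map (\<lambda>b. map (\<lambda>a. a * b) (map (\<lambda>j. card {i \<in> {1..N}. f i = j}) [1..<k + 1]))
                (map (\<lambda>j. card {i \<in> {1..M}. g i = j}) [1..<l + 1])))"
    by (simp only: len_concat_mul) simp
  fix p assume "p < length (map (\<lambda>j. card {i \<in> {1..N * M}. smash N k f g i = j}) [1..<k * l + 1])"
  then have p: "p < k * l" by simp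
  then have k0: "0 < k" by (cases k) auto
  define i where "i = p mod k"
  define j where "j = p div k"
  have i: "i < k" unfolding i_def using k0 by simp
  have j: "j < l" unfolding j_def using p by (simp add: less_mult_imp_div_less mult.commute)
  have pe: "p = j * length (map (\<lambda>j. card {i \<in> {1..N}. f i = j}) [1..<k + 1]) + i"
    unfolding i_def j_def by simp
  show "map (\<lambda>j. card {i \<in> {1..N * M}. smash N k f g i = j}) [1..<k * l + 1] ! p =
    concat (map (\<lambda>b. map (\<lambda>a. a * b) (map (\<lambda>j. card {i \<in> {1..N}. f i = j}) [1..<k + 1]))
                (map (\<lambda>j. card {i \<in> {1..M}. g i = j}) [1..<l + 1])) ! p"
    apply (subst (2) pe)
    apply (subst nth_concat_mul)
    using i j p apply (simp_all add: nth_upt)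
    using smash_fib[OF f g i j] pe by (simp add: add.commute add.left_commute)
qed

lemma wpow_add:
  assumes R: "discrete_gamma_ring R" and w2: "w \<in> car R 2"
  shows "mul R (2^a) (2^b) (wpow R w a) (wpow R w b) = wpow R w (a + b)"
proof (induction b)
  case 0 then show ?case using dgr_unit[OF R wpow_car[OF R w2, of a]] by simp
next
  case (Suc b)
  have "mul R (2^a) (2^Suc b) (wpow R w a) (wpow R w (Suc b))
      = mul R (2^a) (2^b * 2) (wpow R w a) (mul R (2^b) 2 (wpow R w b) w)"
    by (simp add: mult.commute)
  also have "\<dots> = mul R (2^a * 2^b) 2 (mul R (2^a) (2^b) (wpow R w a) (wpow R w b)) w"
    using dgr_assoc[OF R wpow_car[OF R w2, of a] wpow_car[OF R w2, of b] w2] by simp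
  also have "\<dots> = wpow R w (Suc (a + b))" using Suc by (simp add: power_add)
  finally show ?case by simp
qed

lemma pmap_smash:
  assumes f: "pmap N k f" and g: "pmap M l g"
  shows "pmap (N * M) (k * l) (smash N k f g)"
  unfolding pmap_def
proof (intro conjI ballI)
  show "smash N k f g 0 = 0" by (simp add: smash_def)
  fix s assume s: "s \<in> {1..N * M}"
  define a where "a = (s - 1) mod N + 1"
  define b where "b = (s - 1) div N + 1"
  have N0: "0 < N" using s by (cases N) auto
  have se: "s = (b - 1) * N + a" unfolding a_def b_def using s by auto
  have a1: "a \<in> {1..N}" unfolding a_def using N0 mod_less_divisor[OF N0, of "s - 1"] by (auto simp del: mod_less_divisor)
  have "(s - 1) div N < M" using s N0 by (auto simp: div_less_iff_less_mult mult.commute)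
  then have b1: "b \<in> {1..M}" unfolding b_def by auto
  have sv: "smash N k f g s = (if f a = 0 \<or> g b = 0 then 0 else (g b - 1) * k + f a)"
    using smash_at[OF a1, of b k f g] b1 se by auto
  have fk: "f a \<le> k" using f a1 unfolding pmap_def by auto
  have gl: "g b \<le> l" using g b1 unfolding pmap_def by auto
  show "smash N k f g s \<le> k * l"
  proof (cases "f a = 0 \<or> g b = 0")
    case True then show ?thesis using sv by simp
  next
    case False
    have "(g b - 1) * k + f a \<le> (g b - 1) * k + k" using fk by simp
    also have "\<dots> = g b * k" using False by (cases "g b") auto
    also have "\<dots> \<le> l * k" using gl by simp
    finally show ?thesis using sv False by (simp add: mult.commute)
  qed
qed

lemma act_HN_len: "length (act HN n m f xs) = m"
  by (simp add: HN_simps)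

definition phi :: "'a gring \<Rightarrow> 'a \<Rightarrow> nat \<Rightarrow> nat list \<Rightarrow> 'a" where
  "phi R w k xs = (if length xs = k then
     (let r = (SOME r. pmap (2^(fst r)) k (snd r) \<and> act HN (2^(fst r)) k (snd r) (replicate (2^(fst r)) 1) = xs)
      in act R (2^(fst r)) k (snd r) (wpow R w (fst r))) else undefined)"

lemma phi_eq:
  assumes R: "discrete_gamma_ring R" and w: "formal_sum_law R w"
    and f: "pmap (2^n) k f" and x: "act HN (2^n) k f (replicate (2^n) 1) = xs"
  shows "phi R w k xs = act R (2^n) k f (wpow R w n)"
proof -
  have len: "length xs = k" using x act_HN_len by metis
  let ?P = "\<lambda>r. pmap (2^(fst r)) k (snd r) \<and> act HN (2^(fst r)) k (snd r) (replicate (2^(fst r)) 1) = xs"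
  have "?P (n, f)" using f x by simp
  then have P: "?P (SOME r. ?P r)" by (rule someI)
  show ?thesis unfolding phi_def Let_def using len wd[OF R w _ f] P x by simp
qed

lemma psi_eq:
  assumes m: "mult_map HN R \<psi>" and pw: "\<forall>n. \<psi> (2 ^ n) (replicate (2 ^ n) 1) = wpow R w n"
    and f: "pmap (2^n) k f"
  shows "\<psi> k (act HN (2^n) k f (replicate (2^n) 1)) = act R (2^n) k f (wpow R w n)"
proof -
  have "replicate (2^n) (1::nat) \<in> car HN (2^n)" by (simp add: HN_simps)
  then have "\<psi> k (act HN (2^n) k f (replicate (2^n) 1)) = act R (2^n) k f (\<psi> (2^n) (replicate (2^n) 1))"
    using m f unfolding mult_map_def by blast
  then show ?thesis using pw by simp
qed

lemma id_rep: "act HN N N id (replicate N 1) = replicate N 1"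
proof -
  have "card {i\<in>{1..N}. id i = j} = 1" if "j \<in> {1..N}" for j
  proof -
    have "{i\<in>{1..N}. id i = j} = {j}" using that by auto
    then show ?thesis by simp
  qed
  then have "map (\<lambda>j. card {i\<in>{1..N}. id i = j}) [1..<N+1] = map (\<lambda>j. 1) [1..<N+1]"
    by (intro map_cong) auto
  then show ?thesis unfolding actrep by (simp add: map_replicate_const)
qed

lemma phi_mult:
  assumes R: "discrete_gamma_ring R" and w: "formal_sum_law R w"
  shows "mult_map HN R (phi R w)"
  unfolding mult_map_def
proof (intro conjI allI impI)
  have w2: "w \<in> car R 2" by (rule fsl_w2[OF w])
  fix n x assume "x \<in> car HN n"
  then obtain a f where f: "pmap (2^a) n f" "act HN (2^a) n f (replicate (2^a) 1) = x"
    using rep_exists[of x n] by (auto simp: HN_simps)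
  show "phi R w n x \<in> car R n"
    using phi_eq[OF R w f] dgr_act_car[OF R f(1) wpow_car[OF R w2]] by simp
next
  fix n x assume "x \<notin> car HN n"
  then show "phi R w n x = undefined" by (simp add: phi_def HN_simps)
next
  have w2: "w \<in> car R 2" by (rule fsl_w2[OF w])
  fix n m g x assume gx: "pmap n m g \<and> x \<in> car HN n"
  then obtain a f where f: "pmap (2^a) n f" "act HN (2^a) n f (replicate (2^a) 1) = x"
    using rep_exists[of x n] by (auto simp: HN_simps)
  have g: "pmap n m g" using gx by blast
  have "act HN n m g x = act HN (2^a) m (g \<circ> f) (replicate (2^a) 1)"
    using HN_comp_rep[OF f(1) g] f(2) by simp
  then have "phi R w m (act HN n m g x) = act R (2^a) m (g \<circ> f) (wpow R w a)"
    using phi_eq[OF R w pmap_comp[OF f(1) g]] by simp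
  also have "\<dots> = act R n m g (act R (2^a) n f (wpow R w a))"
    using dgr_act_comp[OF R f(1) g wpow_car[OF R w2]] by simp
  also have "\<dots> = act R n m g (phi R w n x)" using phi_eq[OF R w f] by simp
  finally show "phi R w m (act HN n m g x) = act R n m g (phi R w n x)" .
next
  fix n k :: nat assume kn: "k \<le> n"
  let ?e = "\<lambda>i. if i = 1 then k else 0"
  have pe: "pmap (2^0) n ?e" using kn by (simp add: pmap_def)
  have "eta HN n k = act HN (2^0) n ?e (replicate (2^0) 1)" by (simp add: eta_def HN_simps)
  then have "phi R w n (eta HN n k) = act R (2^0) n ?e (wpow R w 0)"
    using phi_eq[OF R w pe] by simp
  then show "phi R w n (eta HN n k) = eta R n k" by (simp add: eta_def)
next
  have w2: "w \<in> car R 2" by (rule fsl_w2[OF w])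
  fix n m p q assume pq: "p \<in> car HN n \<and> q \<in> car HN m"
  then obtain a f where f: "pmap (2^a) n f" "act HN (2^a) n f (replicate (2^a) 1) = p"
    using rep_exists[of p n] by (auto simp: HN_simps)
  obtain b g where g: "pmap (2^b) m g" "act HN (2^b) m g (replicate (2^b) 1) = q"
    using pq rep_exists[of q m] by (auto simp: HN_simps)
  have ps: "pmap (2^(a+b)) (n * m) (smash (2^a) n f g)"
    using pmap_smash[OF f(1) g(1)] by (simp add: power_add)
  have "mul HN n m p q = act HN (2^(a+b)) (n * m) (smash (2^a) n f g) (replicate (2^(a+b)) 1)"
    using smash_rep[OF f(1) g(1)] f(2) g(2) by (simp add: power_add)
  then have "phi R w (n * m) (mul HN n m p q) = act R (2^(a+b)) (n * m) (smash (2^a) n f g) (wpow R w (a + b))"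
    using phi_eq[OF R w ps] by simp
  also have "\<dots> = act R (2^a * 2^b) (n * m) (smash (2^a) n f g) (mul R (2^a) (2^b) (wpow R w a) (wpow R w b))"
    using wpow_add[OF R w2, of a b] by (simp add: power_add)
  also have "\<dots> = mul R n m (act R (2^a) n f (wpow R w a)) (act R (2^b) m g (wpow R w b))"
    by (rule dgr_smash[OF R f(1) g(1) wpow_car[OF R w2] wpow_car[OF R w2]])
  also have "\<dots> = mul R n m (phi R w n p) (phi R w m q)" using phi_eq[OF R w f] phi_eq[OF R w g] by simp
  finally show "phi R w (n * m) (mul HN n m p q) = mul R n m (phi R w n p) (phi R w m q)" .
qed

theorem theorem2p2:
  fixes R :: "'a gring" and w :: 'a
  assumes "discrete_gamma_ring R"
    and "formal_sum_law R w"
  shows "(\<exists>!\<phi>. mult_map HN R \<phi> \<and> (\<forall>n. \<phi> (2 ^ n) (replicate (2 ^ n) 1) = wpow R w n))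
       \<and> (\<forall>\<phi>. mult_map HN R \<phi> \<and> (\<forall>n. \<phi> (2 ^ n) (replicate (2 ^ n) 1) = wpow R w n) \<longrightarrow>
            (\<forall>k xs n f. length xs = k \<and> pmap (2 ^ n) k f
                 \<and> act HN (2 ^ n) k f (replicate (2 ^ n) 1) = xs
               \<longrightarrow> \<phi> k xs = act R (2 ^ n) k f (wpow R w n)))"
proof -
  note R = assms(1) and w = assms(2)
  have w2: "w \<in> car R 2" by (rule fsl_w2[OF w])
  have part2: "\<phi> k xs = act R (2 ^ n) k f (wpow R w n)"
    if m: "mult_map HN R \<phi>" and pw: "\<forall>n. \<phi> (2 ^ n) (replicate (2 ^ n) 1) = wpow R w n"
      and f: "pmap (2 ^ n) k f" and x: "act HN (2 ^ n) k f (replicate (2 ^ n) 1) = xs" for \<phi> k xs n f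
    using psi_eq[OF m pw f] x by simp
  have pm: "mult_map HN R (phi R w)" by (rule phi_mult[OF R w])
  have pw: "\<forall>n. phi R w (2 ^ n) (replicate (2 ^ n) 1) = wpow R w n"
  proof
    fix n
    have "pmap (2^n) (2^n) id" by (simp add: pmap_def)
    then show "phi R w (2 ^ n) (replicate (2 ^ n) 1) = wpow R w n"
      using phi_eq[OF R w _ id_rep] dgr_act_id[OF R wpow_car[OF R w2]] by simp
  qed
  have uniq: "\<psi> = phi R w" if m: "mult_map HN R \<psi>" and pw': "\<forall>n. \<psi> (2 ^ n) (replicate (2 ^ n) 1) = wpow R w n" for \<psi>
  proof (intro ext)
    fix k xs
    show "\<psi> k xs = phi R w k xs"
    proof (cases "xs \<in> car HN k")
      case True
      then obtain a f where f: "pmap (2^a) k f" "act HN (2^a) k f (replicate (2^a) 1) = xs"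
        using rep_exists[of xs k] by (auto simp: HN_simps)
      show ?thesis using part2[OF m pw' f] part2[OF pm pw f] by simp
    next
      case False
      then show ?thesis using m pm unfolding mult_map_def by simp
    qed
  qed
  show ?thesis
  proof (intro conjI)
    show "\<exists>!\<phi>. mult_map HN R \<phi> \<and> (\<forall>n. \<phi> (2 ^ n) (replicate (2 ^ n) 1) = wpow R w n)"
      using pm pw uniq by blast
    show "\<forall>\<phi>. mult_map HN R \<phi> \<and> (\<forall>n. \<phi> (2 ^ n) (replicate (2 ^ n) 1) = wpow R w n) \<longrightarrow>
            (\<forall>k xs n f. length xs = k \<and> pmap (2 ^ n) k f
                 \<and> act HN (2 ^ n) k f (replicate (2 ^ n) 1) = xs
               \<longrightarrow> \<phi> k xs = act R (2 ^ n) k f (wpow R w n))"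
      using part2 by blast
  qed
qed

end
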